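(* Let $\nu\in(-1,-1/2)$ and $\gamma_\nu=-1/2-\nu$. Then there exist constants $C,c>0$ such that for all $t>0$ and $x,y>0$, $$p_t^\nu(x,y)\le C\Big[\frac{1}{\sqrt t}\exp\Big(-\frac{|x-y|^2}{ct}\Big)+\frac1x\Big(\frac xy\Big)^{\gamma_\nu}\chi_{\{y<x/2\}}+\frac1y\Big(\frac yx\Big)^{\gamma_\nu}\chi_{\{x/2\le y\}}\Big].$$
   Context: For $\nu>-1$, $p_t^\nu(x,y)$ denotes the integral kernel of the heat semigroup $e^{-t\mathcal L_\nu}$ of the one-dimensional Laguerre operator $\mathcal L_\nu$ on $(0,\infty)$ (eigenfunctions the Laguerre functions $\varphi_k^\nu$, eigenvalues $4k+2\nu+2$). Explicitly, with $r=e^{-4t}$, $p_t^\nu(x,y)=\frac{2(rxy)^{1/2}}{1-r}\exp\big(-\frac12\frac{1+r}{1-r}(x^2+y^2)\big)I_\nu\big(\frac{2r^{1/2}}{1-r}xy\big)$, where $I_\nu$ is the modified Bessel function of the first kind. $\chi_E$ is the indicator function of $E$. *)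

theory Defs
  imports "HOL-Analysis.Analysis"
begin

definition besselI :: "real \<Rightarrow> real \<Rightarrow> real" where
  "besselI nu z = (\<Sum>k. (z / 2) powr (2 * real k + nu) / (fact k * Gamma (real k + nu + 1)))"

definition laguerre_heat_kernel :: "real \<Rightarrow> real \<Rightarrow> real \<Rightarrow> real \<Rightarrow> real" where
  "laguerre_heat_kernel nu t x y =
     (let r = exp (-4 * t) in
       2 * sqrt (r * x * y) / (1 - r)
       * exp (- (1/2) * ((1 + r) / (1 - r)) * (x^2 + y^2))
       * besselI nu (2 * sqrt r / (1 - r) * x * y))"

end

theory Submission
  imports Defs
begin


lemma gamma_lower:
  fixes nu :: real and k :: nat
  assumes "-1 < nu" "nu < 0"
  shows "Gamma (real k + nu + 1) \<ge> fact k * (real k + 1) powr nu"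
proof -
  define x1 where "x1 = real k + nu + 1"
  have x1pos: "x1 > 0" using assms by (simp add: x1_def)
  have "(ln \<circ> Gamma) ((1 - (-nu)) *\<^sub>R x1 + (-nu) *\<^sub>R (x1 + 1))
        \<le> (1 - (-nu)) * (ln \<circ> Gamma) x1 + (-nu) * (ln \<circ> Gamma) (x1 + 1)"
    by (rule convex_onD[OF log_convex_Gamma_real]) (use assms x1pos in auto)
  moreover have "(1 - (-nu)) *\<^sub>R x1 + (-nu) *\<^sub>R (x1 + 1) = 1 + real k"
    by (simp add: x1_def algebra_simps)
  moreover have "Gamma (x1 + 1) = x1 * Gamma x1"
    using x1pos by (intro Gamma_plus1) (auto elim!: nonpos_Ints_cases')
  ultimately have "ln (fact k) \<le> (1 + nu) * ln (Gamma x1) + (-nu) * ln (x1 * Gamma x1)"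
    using Gamma_real_pos[OF x1pos] by (simp add: Gamma_fact)
  also have "\<dots> = ln (Gamma x1) + (-nu) * ln x1"
  proof -
    have "ln (x1 * Gamma x1) = ln x1 + ln (Gamma x1)"
      using x1pos Gamma_real_pos[OF x1pos] by (rule ln_mult_pos)
    thus ?thesis by (simp add: algebra_simps)
  qed
  finally have "ln (fact k) \<le> ln (Gamma x1 * x1 powr (-nu))"
    using x1pos using Gamma_real_pos[OF x1pos] by (simp add: ln_mult_pos ln_powr)
  hence "fact k \<le> Gamma x1 * x1 powr (-nu)"
    using x1pos by (subst (asm) ln_le_cancel_iff) auto
  hence "fact k * x1 powr nu \<le> Gamma x1"
    using x1pos by (simp add: powr_minus field_simps)
  moreover have "(real k + 1) powr nu \<le> x1 powr nu"
    using assms x1pos by (intro powr_mono2') (auto simp: x1_def)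
  ultimately show ?thesis
    by (smt (verit) fact_ge_zero mult_left_mono x1_def)
qed



lemma fact2_bound: "(fact (2*k) :: real)^2 * (3 * real k + 1) \<le> 16^k * (fact k)^4"
proof (induction k)
  case 0 then show ?case by simp
next
  case (Suc k)
  have e1: "(fact (2 * Suc k) :: real) = (2*real k + 2) * (2*real k + 1) * fact (2*k)"
  proof -
    have "2 * Suc k = Suc (Suc (2*k))" by simp
    hence "(fact (2 * Suc k) :: real) = of_nat (Suc (Suc (2*k))) * (of_nat (Suc (2*k)) * fact (2*k))"
      by (simp only: fact_Suc of_nat_mult)
    thus ?thesis by (simp add: algebra_simps)
  qed
  have e2: "(fact (Suc k) :: real) = (real k + 1) * fact k" by (simp add: algebra_simps)
  have poly: "(2*real k+1)^2 * (3*real k + 4) \<le> 4 * (real k+1)^2 * (3*real k + 1)"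
  proof -
    have "0 \<le> real k" by simp
    thus ?thesis by (simp add: power2_eq_square algebra_simps)
  qed
  define F where "F = (fact (2*k) :: real)"
  define G where "G = (fact k :: real)"
  have IH: "F^2 * (3*real k+1) \<le> 16^k * G^4" using Suc.IH by (simp add: F_def G_def)
  have "(fact (2 * Suc k) :: real)^2 * (3 * real (Suc k) + 1)
      = 4*(real k+1)^2 * ((2*real k+1)^2 * (3*real k + 4)) * F^2"
    by (simp add: e1 F_def power2_eq_square algebra_simps)
  also have "\<dots> \<le> 4*(real k+1)^2 * (4 * (real k+1)^2 * (3*real k + 1)) * F^2"
    by (intro mult_right_mono mult_left_mono poly) auto
  also have "\<dots> = 16*(real k+1)^4 * (F^2 * (3*real k+1))"
    by (simp add: power2_eq_square power4_eq_xxxx algebra_simps)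
  also have "\<dots> \<le> 16*(real k+1)^4 * (16^k * G^4)"
    by (intro mult_left_mono IH) auto
  also have "\<dots> = 16^(Suc k) * (fact (Suc k))^4"
    by (simp add: e2 G_def power_mult_distrib add.commute)
  finally show ?case .
qed



lemma even_sub:
  fixes g :: "nat \<Rightarrow> real"
  assumes "g sums S" "\<And>n. g n \<ge> 0"
  shows "summable (\<lambda>k. g (2*k))" "(\<Sum>k. g (2*k)) \<le> S"
proof -
  have gs: "(\<lambda>n. sum g {n*2..<n*2+2}) sums S" by (rule sums_group[OF assms(1)]) simp
  have eq: "sum g {n*2..<n*2+2} = g (2*n) + g (Suc (2*n))" for n
    by (simp add: numeral_2_eq_2 mult.commute)
  have le: "g (2*n) \<le> sum g {n*2..<n*2+2}" for n using assms(2)[of "Suc (2*n)"] eq[of n] by (simp add: mult.commute)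
  show sm: "summable (\<lambda>k. g (2*k))"
    by (rule summable_comparison_test'[OF sums_summable[OF gs], of 0]) (use le assms(2) in auto)
  have "(\<Sum>k. g (2*k)) \<le> (\<Sum>n. sum g {n*2..<n*2+2})"
    by (rule suminf_le[OF le sm sums_summable[OF gs]])
  also have "\<dots> = S" using gs by (simp add: sums_iff)
  finally show "(\<Sum>k. g (2*k)) \<le> S" .
qed

lemma young_tangent:
  fixes x l b :: real
  assumes "x > 0" "l > 0" "0 \<le> b" "b \<le> 1"
  shows "x powr b \<le> (1 - b) * l powr b + b * l powr (b - 1) * x"
proof -
  have "x powr b * l powr (1 - b) \<le> b * x + (1 - b) * l"
    by (rule Youngs_inequality_0) (use assms in auto)
  hence "x powr b * l powr (1 - b) * l powr (b - 1) \<le> (b * x + (1 - b) * l) * l powr (b - 1)"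
    by (rule mult_right_mono) simp
  moreover have "l powr (1 - b) * l powr (b - 1) = 1"
    using assms by (simp flip: powr_add)
  moreover have "l * l powr (b - 1) = l powr b"
    using assms by (simp add: powr_diff)
  ultimately show ?thesis by (simp add: algebra_simps)
qed

lemma exp_sums0: "(\<lambda>n. z^n / fact n) sums exp (z::real)"
  using exp_converges[of z] by (simp add: divide_inverse mult.commute)

lemma exp_sums1: "(\<lambda>n. (real n + 1) * (z^n / fact n)) sums ((z + 1) * exp (z::real))"
proof -
  have a: "(\<lambda>n. real (Suc n) * (z^(Suc n) / fact (Suc n))) sums (z * exp z)"
  proof -
    have "real (Suc n) * (z^(Suc n) / fact (Suc n)) = z * (z^n / fact n)" for n
    proof -
      have f: "(fact (Suc n) :: real) = (1 + real n) * fact n" by simp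
      have nz: "1 + real n \<noteq> 0" by simp
      have "real (Suc n) * (z^(Suc n) / fact (Suc n)) = ((1 + real n) * (z * z^n)) / ((1 + real n) * fact n)"
        unfolding f by simp
      also have "\<dots> = (z * z^n) / fact n" using nz by (rule mult_divide_mult_cancel_left)
      finally show ?thesis by simp
    qed
    thus ?thesis using sums_mult[OF exp_sums0[of z], of z] by simp
  qed
  hence "(\<lambda>n. real n * (z^n / fact n)) sums (z * exp z)"
    using sums_Suc_iff[of "\<lambda>n. real n * (z^n / fact n)"] by simp
  from sums_add[OF this exp_sums0[of z]] show ?thesis by (simp add: algebra_simps add_divide_distrib)
qed



lemma term_bound:
  fixes nu z :: real and k :: nat
  assumes "-1 < nu" "nu < -1/2" "z > 0"
  defines "b \<equiv> -nu - 1/2"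
  defines "l \<equiv> z + 1"
  shows "(z / 2) powr (2 * real k + nu) / (fact k * Gamma (real k + nu + 1))
    \<le> (z/2) powr nu * (z^(2*k) / fact (2*k) * ((1 - b) * l powr b + b * l powr (b - 1) * (real (2*k) + 1)))"
proof -
  define w where "w = z / 2"
  have wpos: "w > 0" using assms by (simp add: w_def)
  have b01: "0 \<le> b" "b \<le> 1" using assms by (auto simp: b_def)
  have lpos: "l > 0" using assms by (simp add: l_def)
  define Q where "Q = (fact k :: real) * (real k + 1) powr nu"
  have Qpos: "Q > 0" by (simp add: Q_def)
  have GQ: "Gamma (real k + nu + 1) \<ge> Q" unfolding Q_def by (rule gamma_lower) (use assms in auto)
  have split: "w powr (2 * real k + nu) = w powr nu * w^(2*k)"
  proof -
    have "w powr (real (2*k)) = w^(2*k)" using wpos by (rule powr_realpow)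
    thus ?thesis by (simp add: powr_add)
  qed
  have s1: "w powr (2 * real k + nu) / (fact k * Gamma (real k + nu + 1))
      \<le> w powr (2 * real k + nu) / (fact k * Q)"
    by (rule divide_left_mono) (use GQ Qpos in \<open>auto intro!: mult_left_mono mult_pos_pos\<close>)
  have s2: "w powr (2 * real k + nu) / (fact k * Q)
      = w powr nu * (w^(2*k) / (fact k)^2) * (real k + 1) powr (-nu)"
    unfolding split Q_def by (simp add: powr_minus divide_inverse power2_eq_square mult_ac)
  have fb: "fact (2*k) * sqrt (3 * real k + 1) \<le> 4^k * (fact k)^2"
  proof -
    have "sqrt ((fact (2*k))^2 * (3 * real k + 1)) \<le> sqrt (16^k * (fact k)^4)"
      by (rule real_sqrt_le_mono[OF fact2_bound])
    moreover have "sqrt ((fact (2*k))^2 * (3 * real k + 1)) = fact (2*k) * sqrt (3 * real k + 1)"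
      by (simp add: real_sqrt_mult)
    moreover have "sqrt (16^k * (fact k :: real)^4) = 4^k * (fact k)^2"
    proof -
      have "(16::real)^k * (fact k)^4 = (4^k * (fact k)^2)^2"
      proof -
        have h1: "((4::real)^k)^2 = (4^2)^k" by (metis power_mult mult.commute)
        have h2: "((fact k :: real)^2)^2 = (fact k)^4" by (simp flip: power_mult)
        show ?thesis unfolding power_mult_distrib h1 h2 by simp
      qed
      thus ?thesis by simp
    qed
    ultimately show ?thesis by simp
  qed
  have s3: "w^(2*k) / (fact k)^2 \<le> z^(2*k) / (fact (2*k) * sqrt (3 * real k + 1))"
  proof -
    have "w^(2*k) / (fact k)^2 = z^(2*k) / (4^k * (fact k)^2)"
      by (simp add: w_def power_divide power_mult)
    also have "\<dots> \<le> z^(2*k) / (fact (2*k) * sqrt (3 * real k + 1))"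
      by (rule divide_left_mono[OF fb]) (use assms in auto)
    finally show ?thesis .
  qed
  have s4: "(real k + 1) powr (-nu) / sqrt (3 * real k + 1) \<le> (real k + 1) powr b"
  proof -
    have "(real k + 1) powr (-nu) = (real k + 1) powr b * sqrt (real k + 1)"
      by (simp add: b_def powr_half_sqrt[symmetric] flip: powr_add)
    moreover have "sqrt (real k + 1) \<le> sqrt (3 * real k + 1)" by simp
    ultimately show ?thesis
      by (simp add: divide_le_eq mult_left_mono)
  qed
  have s5: "(real k + 1) powr b \<le> (1 - b) * l powr b + b * l powr (b - 1) * (real (2*k) + 1)"
  proof -
    have "(real k + 1) powr b \<le> (1 - b) * l powr b + b * l powr (b - 1) * (real k + 1)"
      by (rule young_tangent) (use lpos b01 in auto)
    also have "\<dots> \<le> (1 - b) * l powr b + b * l powr (b - 1) * (real (2*k) + 1)"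
      using b01 lpos by (intro add_left_mono mult_left_mono) auto
    finally show ?thesis .
  qed
  define K where "K = (1 - b) * l powr b + b * l powr (b - 1) * (real (2*k) + 1)"
  have "w powr (2 * real k + nu) / (fact k * Gamma (real k + nu + 1))
      \<le> w powr nu * (w^(2*k) / (fact k)^2) * (real k + 1) powr (-nu)"
    using s1 s2 by simp
  also have "\<dots> \<le> w powr nu * (z^(2*k) / (fact (2*k) * sqrt (3 * real k + 1))) * (real k + 1) powr (-nu)"
    by (intro mult_right_mono mult_left_mono s3) auto
  also have "\<dots> = w powr nu * (z^(2*k) / fact (2*k)) * ((real k + 1) powr (-nu) / sqrt (3 * real k + 1))"
    by simp
  also have "\<dots> \<le> w powr nu * (z^(2*k) / fact (2*k)) * K"
    unfolding K_def using s4 s5 assms by (intro mult_left_mono) auto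
  finally show ?thesis by (simp add: w_def K_def)
qed



lemma bessel_bound:
  fixes nu z :: real
  assumes "-1 < nu" "nu < -1/2" "z > 0"
  shows "besselI nu z \<le> (z/2) powr nu * exp z * (z + 1) powr (-nu - 1/2)"
proof -
  define b where "b = -nu - 1/2"
  define l where "l = z + 1"
  have b01: "0 \<le> b" "b \<le> 1" using assms by (auto simp: b_def)
  have lpos: "l > 0" using assms by (simp add: l_def)
  define A where "A = (1 - b) * l powr b"
  define B where "B = b * l powr (b - 1)"
  define g where "g n = z^n / fact n * (A + B * (real n + 1))" for n
  have gnn: "g n \<ge> 0" for n
    unfolding g_def A_def B_def using assms b01 by (intro mult_nonneg_nonneg add_nonneg_nonneg) auto
  have "(\<lambda>n. A * (z^n / fact n) + B * ((real n + 1) * (z^n / fact n))) sums (A * exp z + B * ((z + 1) * exp z))"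
    by (intro sums_add sums_mult exp_sums0 exp_sums1)
  moreover have "A * exp z + B * ((z + 1) * exp z) = exp z * l powr b"
  proof -
    have "B * l = b * l powr b" unfolding B_def using lpos by (simp add: powr_diff)
    thus ?thesis unfolding A_def l_def[symmetric] by (simp add: algebra_simps)
  qed
  ultimately have gs: "g sums (exp z * l powr b)"
    unfolding g_def by (simp add: algebra_simps)
  note ev = even_sub[OF gs gnn]
  define T where "T k = (z / 2) powr (2 * real k + nu) / (fact k * Gamma (real k + nu + 1))" for k
  have Tle: "T k \<le> (z/2) powr nu * g (2*k)" for k
    using term_bound[OF assms, of k] unfolding T_def g_def A_def B_def b_def l_def
    by (simp add: algebra_simps)
  have Tnn: "T k \<ge> 0" for k
  proof -
    have "real k + nu + 1 > 0" using assms by simp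
    thus ?thesis unfolding T_def by simp
  qed
  have sm2: "summable (\<lambda>k. (z/2) powr nu * g (2*k))" by (intro summable_mult ev(1))
  have smT: "summable T"
    by (rule summable_comparison_test'[OF sm2, of 0]) (use Tle Tnn in auto)
  have "besselI nu z = suminf T" unfolding besselI_def T_def ..
  also have "\<dots> \<le> (\<Sum>k. (z/2) powr nu * g (2*k))" by (rule suminf_le[OF Tle smT sm2])
  also have "\<dots> = (z/2) powr nu * (\<Sum>k. g (2*k))" by (rule suminf_mult[OF ev(1)])
  also have "\<dots> \<le> (z/2) powr nu * (exp z * l powr b)" by (intro mult_left_mono ev(2)) auto
  finally show ?thesis by (simp add: l_def b_def mult_ac)
qed



lemma powexp: fixes u al :: real assumes "u \<ge> 0" "0 < al" "al \<le> 1"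
  shows "u powr al * exp (-u) \<le> 1"
proof -
  have "u powr al \<le> 1 + u"
  proof (cases "u \<le> 1")
    case True
    hence "u powr al \<le> 1" using assms by (intro powr_le1) auto
    thus ?thesis using assms by simp
  next
    case False
    hence "u powr al \<le> u powr 1" using assms by (intro powr_mono) auto
    thus ?thesis using False by simp
  qed
  also have "\<dots> \<le> exp u" by (rule exp_ge_add_one_self)
  finally have "u powr al * exp (-u) \<le> exp u * exp (-u)" by (rule mult_right_mono) simp
  thus ?thesis by (simp flip: exp_add)
qed

lemma gaussdecay: fixes u :: real assumes "u > 0" shows "exp (-(3/10) * u^2) \<le> 1 / u"
proof -
  have "u \<le> 1 + (3/10) * u^2"
  proof -
    have "0 \<le> (3/10) * (u - 5/3)^2 + 1/6" by simp
    thus ?thesis by (simp add: power2_eq_square algebra_simps)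
  qed
  also have "\<dots> \<le> exp ((3/10) * u^2)" by (rule exp_ge_add_one_self)
  finally have "u * exp (-(3/10) * u^2) \<le> exp ((3/10) * u^2) * exp (-(3/10) * u^2)"
    by (rule mult_right_mono) simp
  hence "u * exp (-(3/10) * u^2) \<le> 1" by (simp flip: exp_add)
  thus ?thesis using assms by (simp add: field_simps)
qed

lemma powr_ident:
  fixes b x y nu :: real assumes "b > 0" "x > 0" "y > 0"
  shows "2 * b * sqrt (x * y) * (b * x * y) powr nu
         = 2 * (b * x^2) powr (nu + 1) * ((1 / x) * (x / y) powr (-1/2 - nu))"
proof -
  have p1: "2 * b * sqrt (x * y) * (b * x * y) powr nu > 0" using assms by simp
  have p2: "2 * (b * x^2) powr (nu + 1) * ((1 / x) * (x / y) powr (-1/2 - nu)) > 0" using assms by simp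
  have l1: "ln (2 * b * sqrt (x * y) * (b * x * y) powr nu)
      = ln 2 + ln b + (ln x + ln y) / 2 + nu * (ln b + ln x + ln y)"
    using assms by (simp add: ln_mult_pos ln_powr ln_sqrt)
  have l2: "ln (2 * (b * x^2) powr (nu + 1) * ((1 / x) * (x / y) powr (-1/2 - nu)))
      = ln 2 + (nu + 1) * (ln b + 2 * ln x) - ln x + (-1/2 - nu) * (ln x - ln y)"
    using assms by (simp add: ln_mult_pos ln_powr ln_div ln_realpow)
  have "ln (2 * b * sqrt (x * y) * (b * x * y) powr nu)
      = ln (2 * (b * x^2) powr (nu + 1) * ((1 / x) * (x / y) powr (-1/2 - nu)))"
    unfolding l1 l2 by (simp add: algebra_simps add_divide_distrib diff_divide_distrib)
  thus ?thesis using p1 p2 by simp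
qed



lemma kernel_bound:
  fixes nu t x y :: real
  assumes nu: "-1 < nu" "nu < -1/2" and tp: "t > 0" and xp: "x > 0" and yp: "y > 0"
  shows "laguerre_heat_kernel nu t x y \<le>
        16 * (1 / sqrt t * exp (- (\<bar>x - y\<bar>^2) / (36 * t))
             + (1 / x) * (x / y) powr (-1/2 - nu) * indicator {y. y < x / 2} y
             + (1 / y) * (y / x) powr (-1/2 - nu) * indicator {y. x / 2 \<le> y} y)"
proof -
  define be where "be = -1/2 - nu"
  have be01: "0 < be" "be < 1/2" using nu by (auto simp: be_def)
  define s where "s = exp (-2 * t)"
  define r where "r = exp (-4 * t)"
  have rs: "r = s^2" unfolding r_def s_def by (simp flip: exp_add add: power2_eq_square)
  have s01: "0 < s" "s < 1" using tp by (auto simp: s_def)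
  have sqr: "sqrt r = s" using rs s01 by simp
  have r01: "0 < r" "r < 1" using rs s01 by (auto simp: power_less_one_iff)
  define b where "b = s / (1 - r)"
  define a where "a = (1/2) * ((1 + r) / (1 - r))"
  define z where "z = 2 * b * x * y"
  define E where "E = exp (- a * (x^2 + y^2))"
  have bpos: "b > 0" using s01 r01 by (simp add: b_def)
  have zpos: "z > 0" using bpos xp yp by (simp add: z_def)
  have ab: "a \<ge> b"
  proof -
    have "0 \<le> (s - 1)^2" by simp
    hence "2 * s \<le> 1 + r" using rs by (simp add: power2_eq_square algebra_simps)
    hence "s / (1 - r) \<le> ((1 + r) / 2) / (1 - r)" using r01 by (intro divide_right_mono) auto
    thus ?thesis by (simp add: a_def b_def)
  qed
  have kern: "laguerre_heat_kernel nu t x y = 2 * b * sqrt (x * y) * E * besselI nu z"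
  proof -
    have "sqrt (r * x * y) = s * sqrt (x * y)" by (simp add: real_sqrt_mult sqr)
    moreover have "2 * sqrt r / (1 - r) * x * y = z" by (simp add: sqr z_def b_def)
    ultimately show ?thesis
      unfolding laguerre_heat_kernel_def Let_def r_def[symmetric] E_def a_def b_def
      by (simp add: algebra_simps)
  qed
  have Ibd: "besselI nu z \<le> (z/2) powr nu * exp z * (z + 1) powr be"
  proof -
    have "-nu - 1/2 = be" by (simp add: be_def)
    thus ?thesis using bessel_bound[OF nu zpos] by simp
  qed
  define W1 where "W1 = (1 / x) * (x / y) powr be"
  define W2 where "W2 = (1 / y) * (y / x) powr be"
  define W where "W = W1 * indicator {y. y < x / 2} y + W2 * indicator {y. x / 2 \<le> y} y"
  define Gs where "Gs = 1 / sqrt t * exp (- (\<bar>x - y\<bar>^2) / (36 * t))"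
  have W1nn: "W1 \<ge> 0" "W2 \<ge> 0" using xp yp by (auto simp: W1_def W2_def)
  have Wnn: "W \<ge> 0" using W1nn by (simp add: W_def)
  have Gnn: "Gs \<ge> 0" using tp by (simp add: Gs_def)
  have Pnn: "2 * b * sqrt (x * y) * E \<ge> 0" using bpos xp yp by (simp add: E_def)
  have K1: "laguerre_heat_kernel nu t x y \<le> 2 * b * sqrt (x * y) * E * ((z/2) powr nu * exp z * (z + 1) powr be)"
    unfolding kern by (rule mult_left_mono[OF Ibd Pnn])
  have exp2: "exp (2::real) \<le> 9" "exp (2::real) \<ge> 4"
  proof -
    have e: "exp (2::real) = exp 1 * exp 1" by (simp flip: exp_add)
    have u: "exp (1::real) \<le> 3" by (rule exp_le)
    have l: "exp (1::real) \<ge> 2" using exp_ge_add_one_self[of "1::real"] by simp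
    have "exp (1::real) * exp 1 \<le> 3 * 3" by (rule mult_mono[OF u u]) auto
    thus "exp (2::real) \<le> 9" using e by simp
    have "(2::real) * 2 \<le> exp 1 * exp 1" by (rule mult_mono[OF l l]) auto
    thus "exp (2::real) \<ge> 4" using e by simp
  qed
  have main: "laguerre_heat_kernel nu t x y \<le> 16 * Gs \<or> laguerre_heat_kernel nu t x y \<le> 16 * W"
  proof (cases "z \<le> 1")
    case True
    have zb: "z / 2 = b * x * y" by (simp add: z_def)
    have I2: "(z/2) powr nu * exp z * (z + 1) powr be \<le> 6 * (b * x * y) powr nu"
    proof -
      have "exp z \<le> 3" using True exp_le by (smt (verit) exp_le_cancel_iff)
      moreover have "(z + 1) powr be \<le> 2"
      proof -
        have "(z + 1) powr be \<le> 2 powr be" using True zpos be01 by (intro powr_mono2) auto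
        also have "\<dots> \<le> 2 powr 1" using be01 by (intro powr_mono) auto
        finally show ?thesis by simp
      qed
      ultimately have "exp z * (z + 1) powr be \<le> 3 * 2" by (intro mult_mono) auto
      hence "(b * x * y) powr nu * (exp z * (z + 1) powr be) \<le> (b * x * y) powr nu * 6"
        by (intro mult_left_mono) auto
      thus ?thesis unfolding zb by (simp add: mult_ac)
    qed
    have K2: "laguerre_heat_kernel nu t x y \<le> 6 * E * (2 * b * sqrt (x * y) * (b * x * y) powr nu)"
    proof -
      have "laguerre_heat_kernel nu t x y \<le> 2 * b * sqrt (x * y) * E * (6 * (b * x * y) powr nu)"
        using K1 mult_left_mono[OF I2 Pnn] by linarith
      thus ?thesis by (simp add: algebra_simps)
    qed
    have al: "0 < nu + 1" "nu + 1 \<le> 1" using nu by auto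
    show ?thesis
    proof (cases "y < x / 2")
      case True
      have WW: "W = W1" using True by (simp add: W_def)
      have "E \<le> exp (- (b * x^2))"
      proof -
        have "b * x^2 \<le> a * (x^2 + y^2)" using ab bpos by (intro mult_mono) auto
        thus ?thesis by (simp add: E_def)
      qed
      have "6 * E * (2 * b * sqrt (x * y) * (b * x * y) powr nu)
          = 12 * (E * (b * x^2) powr (nu + 1)) * W1"
        unfolding powr_ident[OF bpos xp yp] W1_def be_def by simp
      also have "\<dots> \<le> 12 * 1 * W1"
      proof -
        have "E * (b * x^2) powr (nu + 1) \<le> exp (- (b * x^2)) * (b * x^2) powr (nu + 1)"
          using \<open>E \<le> _\<close> by (intro mult_right_mono) auto
        also have "\<dots> \<le> 1" using powexp[of "b * x^2" "nu + 1"] al bpos by (simp add: mult.commute)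
        finally show ?thesis using W1nn by (intro mult_right_mono mult_left_mono) auto
      qed
      finally have "6 * E * (2 * b * sqrt (x * y) * (b * x * y) powr nu) \<le> 12 * 1 * W" using WW by simp
      thus ?thesis using K2 W1nn WW by linarith
    next
      case False
      have WW: "W = W2" using False by (simp add: W_def)
      have "E \<le> exp (- (b * y^2))"
      proof -
        have "b * y^2 \<le> a * (x^2 + y^2)" using ab bpos by (intro mult_mono) auto
        thus ?thesis by (simp add: E_def)
      qed
      have "6 * E * (2 * b * sqrt (x * y) * (b * x * y) powr nu)
          = 6 * E * (2 * b * sqrt (y * x) * (b * y * x) powr nu)" by (simp add: mult_ac)
      also have "\<dots> = 12 * (E * (b * y^2) powr (nu + 1)) * W2"
        unfolding powr_ident[OF bpos yp xp] W2_def be_def by simp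
      also have "\<dots> \<le> 12 * 1 * W2"
      proof -
        have "E * (b * y^2) powr (nu + 1) \<le> exp (- (b * y^2)) * (b * y^2) powr (nu + 1)"
          using \<open>E \<le> _\<close> by (intro mult_right_mono) auto
        also have "\<dots> \<le> 1" using powexp[of "b * y^2" "nu + 1"] al bpos by (simp add: mult.commute)
        finally show ?thesis using W1nn by (intro mult_right_mono mult_left_mono) auto
      qed
      finally have "6 * E * (2 * b * sqrt (x * y) * (b * x * y) powr nu) \<le> 12 * 1 * W" using WW by simp
      thus ?thesis using K2 W1nn WW by linarith
    qed
  next
    case False
    hence z1: "z \<ge> 1" by simp
    have I2: "(z/2) powr nu * exp z * (z + 1) powr be \<le> 4 * exp z / sqrt z"
    proof -
      have "(z + 1) powr be \<le> (2 * z) powr be" using z1 be01 by (intro powr_mono2) auto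
      hence "(z/2) powr nu * (z + 1) powr be \<le> (z/2) powr nu * (2 * z) powr be"
        by (intro mult_left_mono) auto
      also have "\<dots> = (2 powr be / 2 powr nu) * (z powr nu * z powr be)"
      proof -
        have "(z/2) powr nu = z powr nu / 2 powr nu" by (rule powr_divide)
        moreover have "(2 * z) powr be = 2 powr be * z powr be" by (rule powr_mult)
        ultimately show ?thesis by (simp only:) (simp add: field_simps)
      qed
      also have "\<dots> = 2 powr (be - nu) * z powr (- (1/2))"
      proof -
        have "2 powr be / 2 powr nu = (2::real) powr (be - nu)" by (rule powr_diff[symmetric])
        moreover have "z powr nu * z powr be = z powr (nu + be)" by (rule powr_add[symmetric])
        moreover have "nu + be = - (1/2)" by (simp add: be_def)
        ultimately show ?thesis by simp
      qed
      also have "\<dots> = 2 powr (be - nu) / sqrt z"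
      proof -
        have "z powr (- (1/2)) = inverse (z powr (1/2))" by (rule powr_minus)
        also have "\<dots> = inverse (sqrt z)" using zpos by (simp add: powr_half_sqrt)
        finally have h: "z powr (- (1/2)) = 1 / sqrt z" by (simp add: inverse_eq_divide)
        show ?thesis unfolding h by simp
      qed
      also have "\<dots> \<le> 4 / sqrt z"
      proof -
        have "(2::real) powr (be - nu) \<le> 2 powr 2" using nu by (intro powr_mono) (auto simp: be_def)
        thus ?thesis using zpos by (intro divide_right_mono) auto
      qed
      finally have "(z/2) powr nu * (z + 1) powr be \<le> 4 / sqrt z" .
      hence "exp z * ((z/2) powr nu * (z + 1) powr be) \<le> exp z * (4 / sqrt z)"
        by (intro mult_left_mono) auto
      thus ?thesis by (simp add: mult_ac)
    qed
    have K2: "laguerre_heat_kernel nu t x y \<le> 4 * sqrt (2 * b) * exp (- a * (x^2 + y^2) + 2 * b * x * y)"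
    proof -
      have "laguerre_heat_kernel nu t x y \<le> 2 * b * sqrt (x * y) * E * (4 * exp z / sqrt z)"
        using K1 mult_left_mono[OF I2 Pnn] by linarith
      moreover have q: "(2 * b * sqrt (x * y)) / sqrt z = sqrt (2 * b)"
      proof -
        have sz: "sqrt z = sqrt (2 * b) * sqrt (x * y)" by (simp add: z_def real_sqrt_mult mult.assoc)
        have "2 * b = sqrt (2 * b) * sqrt (2 * b)" using bpos by simp
        hence "2 * b * sqrt (x * y) = sqrt (2 * b) * sqrt z" unfolding sz by (simp add: mult_ac)
        thus ?thesis using zpos by simp
      qed
      moreover have "E * exp z = exp (- a * (x^2 + y^2) + 2 * b * x * y)"
        by (simp add: E_def z_def flip: exp_add)
      moreover have "2 * b * sqrt (x * y) * E * (4 * exp z / sqrt z)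
          = 4 * ((2 * b * sqrt (x * y)) / sqrt z) * (E * exp z)" by (simp add: field_simps)
      ultimately show ?thesis by simp
    qed
    have xyE: "2 * x * y \<le> x^2 + y^2"
    proof -
      have "0 \<le> (x - y)^2" by simp
      thus ?thesis by (simp add: power2_eq_square algebra_simps)
    qed
    show ?thesis
    proof (cases "t \<le> 1")
      case True
      have rlo: "1 - r \<le> 4 * t" using exp_ge_add_one_self[of "-4 * t"] by (simp add: r_def)
      have rhi: "4 * t / 5 \<le> 1 - r"
      proof -
        have e4: "1 + 4 * t \<le> exp (4 * t)" using exp_ge_add_one_self[of "4 * t"] by simp
        have "r = 1 / exp (4 * t)" by (simp add: r_def exp_minus inverse_eq_divide)
        also have "\<dots> \<le> 1 / (1 + 4 * t)" using tp e4 by (intro divide_left_mono) auto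
        finally have "r \<le> 1 / (1 + 4 * t)" .
        moreover have "4 * t / 5 \<le> 1 - 1 / (1 + 4 * t)"
          using tp True by (simp add: field_simps)
        ultimately show ?thesis by linarith
      qed
      have s9: "s \<ge> 1/9"
      proof -
        have "exp (-2) \<le> s" using True by (simp add: s_def)
        moreover have "exp (-2::real) = 1 / exp 2" by (simp add: exp_minus inverse_eq_divide)
        moreover have "1 / 9 \<le> 1 / exp (2::real)" using exp2 by (intro divide_left_mono) auto
        ultimately show ?thesis by linarith
      qed
      have blo: "1 / (36 * t) \<le> b"
      proof -
        have "1 / (36 * t) = (1/9) / (4 * t)" by simp
        also have "\<dots> \<le> s / (4 * t)" using s9 tp by (intro divide_right_mono) auto
        also have "\<dots> \<le> s / (1 - r)" using rlo r01 s01 by (intro divide_left_mono) auto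
        finally show ?thesis by (simp add: b_def)
      qed
      have bhi: "2 * b \<le> 4 / t"
      proof -
        have "b \<le> 1 / (1 - r)" using s01 r01 by (simp add: b_def divide_right_mono)
        also have "\<dots> \<le> 1 / (4 * t / 5)" using rhi tp by (intro divide_left_mono) auto
        finally show ?thesis using tp by (simp add: field_simps)
      qed
      have sq: "sqrt (2 * b) \<le> 2 / sqrt t"
      proof -
        have "sqrt (2 * b) \<le> sqrt (4 / t)" using bhi by simp
        also have "sqrt (4 / t) = 2 / sqrt t" by (simp add: real_sqrt_divide)
        finally show ?thesis .
      qed
      have ex: "- a * (x^2 + y^2) + 2 * b * x * y \<le> - (\<bar>x - y\<bar>^2) / (36 * t)"
      proof -
        have "- a * (x^2 + y^2) + 2 * b * x * y \<le> - b * (x^2 + y^2) + 2 * b * x * y"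
          using ab by (simp add: mult_right_mono)
        also have "\<dots> = - (b * (x - y)^2)" by (simp add: power2_eq_square algebra_simps)
        also have "\<dots> \<le> - ((1 / (36 * t)) * (x - y)^2)"
        proof -
          have "(1 / (36 * t)) * (x - y)^2 \<le> b * (x - y)^2" by (rule mult_right_mono[OF blo]) simp
          thus ?thesis by linarith
        qed
        finally show ?thesis by simp
      qed
      have "laguerre_heat_kernel nu t x y \<le> 4 * (2 / sqrt t) * exp (- (\<bar>x - y\<bar>^2) / (36 * t))"
      proof -
        have "4 * sqrt (2 * b) * exp (- a * (x^2 + y^2) + 2 * b * x * y)
            \<le> 4 * (2 / sqrt t) * exp (- (\<bar>x - y\<bar>^2) / (36 * t))"
          using sq ex bpos tp by (intro mult_mono) auto
        thus ?thesis using K2 by linarith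
      qed
      hence "laguerre_heat_kernel nu t x y \<le> 8 * Gs" by (simp add: Gs_def)
      thus ?thesis using Gnn by linarith
    next
      case False
      have s4: "s \<le> 1/4"
      proof -
        have "s \<le> exp (-2)" using False by (simp add: s_def)
        moreover have "exp (-2::real) = 1 / exp 2" by (simp add: exp_minus inverse_eq_divide)
        moreover have "1 / exp (2::real) \<le> 1 / 4" using exp2 by (intro divide_left_mono) auto
        ultimately show ?thesis by linarith
      qed
      have amb: "a - b \<ge> 3/10"
      proof -
        have "a - b = (1 + r - 2 * s) / (2 * (1 - r))"
        proof -
          have "a = (1 + r) / (2 * (1 - r))" by (simp add: a_def)
          moreover have "b = (2 * s) / (2 * (1 - r))" unfolding b_def by (rule mult_divide_mult_cancel_left[symmetric]) simp
          ultimately show ?thesis by (simp add: diff_divide_distrib)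
        qed
        moreover have "6 * (1 - r) \<le> 10 * (1 + r - 2 * s)"
        proof -
          have "0 \<le> (1 - 4 * s) * (1 - s)" using s4 s01 by (intro mult_nonneg_nonneg) auto
          thus ?thesis using rs by (simp add: power2_eq_square algebra_simps)
        qed
        moreover have "3/10 \<le> (1 + r - 2 * s) / (2 * (1 - r))"
        proof -
          have "3/10 * (2 * (1 - r)) \<le> 1 + r - 2 * s" using \<open>6 * (1 - r) \<le> _\<close> by simp
          thus ?thesis using r01 by (subst pos_le_divide_eq) auto
        qed
        ultimately show ?thesis by simp
      qed
      have bhi: "2 * b \<le> 1"
      proof -
        have "s * s \<le> s * (1/4)" using s4 s01 by (intro mult_left_mono) auto
        hence "2 * s \<le> 1 - r" using rs s4 by (simp add: power2_eq_square)
        hence "s / (1 - r) \<le> 1/2" using r01 by (subst pos_divide_le_eq) auto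
        thus ?thesis unfolding b_def by linarith
      qed
      have sq: "sqrt (2 * b) \<le> 1" using bhi by simp
      have ex: "- a * (x^2 + y^2) + 2 * b * x * y \<le> - (3/10) * (x^2 + y^2)"
      proof -
        have "b * (2 * x * y) \<le> b * (x^2 + y^2)" using xyE bpos by (intro mult_left_mono) auto
        hence "2 * b * x * y \<le> b * (x^2 + y^2)" by (simp add: mult_ac)
        hence "- a * (x^2 + y^2) + 2 * b * x * y \<le> - (a - b) * (x^2 + y^2)" by (simp add: algebra_simps)
        also have "\<dots> \<le> - (3/10) * (x^2 + y^2)"
        proof -
          have "(3/10) * (x^2 + y^2) \<le> (a - b) * (x^2 + y^2)" by (rule mult_right_mono[OF amb]) simp
          thus ?thesis by linarith
        qed
        finally show ?thesis .
      qed
      have K3: "laguerre_heat_kernel nu t x y \<le> 4 * exp (- (3/10) * (x^2 + y^2))"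
      proof -
        have "4 * sqrt (2 * b) * exp (- a * (x^2 + y^2) + 2 * b * x * y) \<le> 4 * 1 * exp (- (3/10) * (x^2 + y^2))"
          using sq ex bpos by (intro mult_mono) auto
        thus ?thesis using K2 by linarith
      qed
      show ?thesis
      proof (cases "y < x / 2")
        case True
        have WW: "W = W1" using True by (simp add: W_def)
        have "exp (- (3/10) * (x^2 + y^2)) \<le> exp (- (3/10) * x^2)" by simp
        also have "\<dots> \<le> 1 / x" by (rule gaussdecay[OF xp])
        also have "\<dots> \<le> W1"
        proof -
          have "1 \<le> (x / y) powr be" using True yp be01 by (intro ge_one_powr_ge_zero) (auto simp: field_simps)
          thus ?thesis using xp unfolding W1_def by (simp add: divide_right_mono)
        qed
        finally show ?thesis using K3 WW W1nn by linarith
      next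
        case False
        have WW: "W = W2" using False by (simp add: W_def)
        have "exp (- (3/10) * (x^2 + y^2)) \<le> exp (- (3/10) * y^2)" by simp
        also have "\<dots> \<le> 1 / y" by (rule gaussdecay[OF yp])
        also have "\<dots> \<le> 2 * W2"
        proof -
          have "(1/2) powr be \<le> (y / x) powr be" using False xp be01 by (intro powr_mono2) (auto simp: field_simps)
          moreover have "(1/2::real) \<le> (1/2) powr be"
          proof -
            have "(1/2::real) powr 1 \<le> (1/2) powr be" using be01 by (intro powr_mono') auto
            thus ?thesis by simp
          qed
          ultimately have "1/2 \<le> (y / x) powr be" by linarith
          thus ?thesis using yp by (simp add: W2_def field_simps)
        qed
        finally show ?thesis using K3 WW W1nn by linarith
      qed
    qed
  qed
  have "16 * Gs \<le> 16 * (Gs + W)" "16 * W \<le> 16 * (Gs + W)" using Gnn Wnn by auto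
  hence "laguerre_heat_kernel nu t x y \<le> 16 * (Gs + W)" using main by linarith
  thus ?thesis by (simp add: Gs_def W_def W1_def W2_def be_def add.assoc)
qed


theorem lemma3p2:
  fixes nu :: real
  assumes "-1 < nu" and "nu < -1/2"
  shows "\<exists>C c. C > 0 \<and> c > 0 \<and>
    (\<forall>t x y. t > 0 \<longrightarrow> x > 0 \<longrightarrow> y > 0 \<longrightarrow>
      laguerre_heat_kernel nu t x y \<le>
        C * (1 / sqrt t * exp (- (\<bar>x - y\<bar>^2) / (c * t))
             + (1 / x) * (x / y) powr (-1/2 - nu) * indicator {y. y < x / 2} y
             + (1 / y) * (y / x) powr (-1/2 - nu) * indicator {y. x / 2 \<le> y} y))"
  using kernel_bound[OF assms] by (intro exI[of _ 16] exI[of _ 36]) auto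

end
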